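(* Let $E$ be a (Hausdorff, real) topological vector space and let $A\subseteq E$ be an infinite, linearly independent, absolutely Cauchy summable subset. Then $A$ contains an infinite subset $B$ such that for every finite set $C\subseteq B$ the projection $\pi^B_C:\mathrm{span}_{\mathbb R}(B)\to\mathrm{span}_{\mathbb R}(C)$ is continuous.
   Context: $\mathrm{span}_{\mathbb R}(X)$ denotes the linear span of $X$, with the subspace topology from $E$. For a linearly independent set $B$ and $C\subseteq B$, $\pi^B_C:\mathrm{span}_{\mathbb R}(B)\to\mathrm{span}_{\mathbb R}(C)$ is the unique linear projection with kernel $\mathrm{span}_{\mathbb R}(B\setminus C)$ which is the identity on $\mathrm{span}_{\mathbb R}(C)$. A subset $A\subseteq E$ is absolutely Cauchy summable if for every neighbourhood $U$ of $0$ there is a finite $F\subseteq A$ such that the additive subgroup generated by $A\setminus F$ is contained in $U$. *)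

theory Defs
  imports "HOL-Analysis.Analysis"
begin

definition add_subgroup_gen :: "'a::ab_group_add set \<Rightarrow> 'a set" where
  "add_subgroup_gen S = \<Inter>{G. S \<subseteq> G \<and> 0 \<in> G \<and> (\<forall>x\<in>G. \<forall>y\<in>G. x - y \<in> G)}"

text \<open>Absolutely Cauchy summable: for every neighbourhood U of 0 there is a finite
  F \<subseteq> A such that the additive subgroup generated by A - F lies in U.
  (It suffices to quantify over open neighbourhoods, since the condition is monotone in U.)\<close>
definition abs_cauchy_summable :: "'a::{real_vector,topological_space} set \<Rightarrow> bool" where
  "abs_cauchy_summable A \<longleftrightarrow>
     (\<forall>U. open U \<and> 0 \<in> U \<longrightarrow> (\<exists>F. finite F \<and> F \<subseteq> A \<and> add_subgroup_gen (A - F) \<subseteq> U))"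

text \<open>The projection pi^B_C on span B (B independent, C \<subseteq> B): keep the
  coordinates in C, kill those in B - C.\<close>
definition proj_span :: "'a::real_vector set \<Rightarrow> 'a set \<Rightarrow> 'a \<Rightarrow> 'a" where
  "proj_span B C x = (\<Sum>c\<in>C. representation B x c *\<^sub>R c)"

end

theory Submission
  imports Defs
begin

definition balanced :: "'a::real_vector set \<Rightarrow> bool" where
  "balanced W \<longleftrightarrow> (\<forall>x\<in>W. \<forall>t::real. \<bar>t\<bar> \<le> 1 \<longrightarrow> t *\<^sub>R x \<in> W)"

context
  fixes dummy :: "'a::{real_vector,t2_space} itself"
  assumes add_cont: "continuous_on UNIV (\<lambda>p::'a \<times> 'a. fst p + snd p)"
    and scale_cont: "continuous_on UNIV (\<lambda>p::real \<times> 'a. fst p *\<^sub>R snd p)"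
begin

lemma cmap_add:
  fixes f g :: "'b \<Rightarrow> 'a"
  assumes "continuous_map X euclidean f" "continuous_map X euclidean g"
  shows "continuous_map X euclidean (\<lambda>x. f x + g x)"
proof -
  have "continuous_map X (prod_topology euclidean euclidean) (\<lambda>x. (f x, g x))"
    by (rule continuous_map_pairedI[OF assms])
  then have "continuous_map X euclidean (\<lambda>x. (f x, g x))" by (simp only: prod_topology_euclidean)
  moreover have "continuous_map euclidean euclidean (\<lambda>p::'a \<times> 'a. fst p + snd p)"
    using add_cont by simp
  ultimately show ?thesis
    using continuous_map_compose[of X euclidean "\<lambda>x. (f x, g x)" euclidean "\<lambda>p::'a \<times> 'a. fst p + snd p"]
    by (simp add: o_def)
qed

lemma cmap_scale:
  fixes f :: "'b \<Rightarrow> real" and g :: "'b \<Rightarrow> 'a"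
  assumes "continuous_map X euclidean f" "continuous_map X euclidean g"
  shows "continuous_map X euclidean (\<lambda>x. f x *\<^sub>R g x)"
proof -
  have "continuous_map X (prod_topology euclidean euclidean) (\<lambda>x. (f x, g x))"
    by (rule continuous_map_pairedI[OF assms])
  then have "continuous_map X euclidean (\<lambda>x. (f x, g x))" by (simp only: prod_topology_euclidean)
  moreover have "continuous_map euclidean euclidean (\<lambda>p::real \<times> 'a. fst p *\<^sub>R snd p)"
    using scale_cont by simp
  ultimately show ?thesis
    using continuous_map_compose[of X euclidean "\<lambda>x. (f x, g x)" euclidean "\<lambda>p::real \<times> 'a. fst p *\<^sub>R snd p"]
    by (simp add: o_def)
qed

lemma cmap_sum:
  fixes f :: "'i \<Rightarrow> 'b \<Rightarrow> 'a"
  assumes "\<And>i. i \<in> I \<Longrightarrow> continuous_map X euclidean (f i)"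
  shows "continuous_map X euclidean (\<lambda>x. \<Sum>i\<in>I. f i x)"
  using assms
proof (induction I rule: infinite_finite_induct)
  case (insert i I)
  then show ?case by (simp add: cmap_add)
qed auto

lemma cont_affine: "continuous_on UNIV (\<lambda>y::'a. c *\<^sub>R (y + d))"
proof -
  have "continuous_map euclidean euclidean (\<lambda>y::'a. c *\<^sub>R (y + d))"
    by (intro cmap_scale cmap_add) auto
  then show ?thesis by simp
qed

lemma balanced_nbhd:
  fixes N :: "'a set"
  assumes "open N" "0 \<in> N"
  shows "\<exists>W. open W \<and> 0 \<in> W \<and> W \<subseteq> N \<and> balanced W"
proof -
  have "open ((\<lambda>p::real \<times> 'a. fst p *\<^sub>R snd p) -` N)"
    using open_vimage[OF assms(1) scale_cont] .
  moreover have "(0, 0) \<in> (\<lambda>p::real \<times> 'a. fst p *\<^sub>R snd p) -` N" using assms by simp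
  ultimately obtain R V where RV: "open R" "open V" "(0,0) \<in> R \<times> V"
      "R \<times> V \<subseteq> (\<lambda>p::real \<times> 'a. fst p *\<^sub>R snd p) -` N"
    by (rule open_prod_elim)
  have "0 \<in> R" using RV(3) by (simp add: mem_Times_iff)
  then obtain d where d: "d > 0" "ball 0 d \<subseteq> R"
    using RV(1) open_contains_ball by blast
  define W where "W = (\<Union>s\<in>{s::real. 0 < \<bar>s\<bar> \<and> \<bar>s\<bar> < d}. (\<lambda>x. (1/s) *\<^sub>R (x + 0)) -` V)"
  have "open W" unfolding W_def
    by (intro open_UN ballI open_vimage[OF RV(2)] cont_affine)
  moreover have "0 \<in> W" unfolding W_def using RV d
    by (intro UN_I[of "d/2"]) auto
  moreover have "W \<subseteq> N"
  proof
    fix x assume "x \<in> W"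
    then obtain s where s: "0 < \<bar>s\<bar>" "\<bar>s\<bar> < d" "(1/s) *\<^sub>R x \<in> V" unfolding W_def by auto
    then have "s \<in> R" using d by auto
    with s RV(4) have "s *\<^sub>R ((1/s) *\<^sub>R x) \<in> N" by auto
    with s show "x \<in> N" by simp
  qed
  moreover have "balanced W" unfolding balanced_def
  proof (intro ballI allI impI)
    fix x and t :: real assume x: "x \<in> W" and t: "\<bar>t\<bar> \<le> 1"
    then obtain s where s: "0 < \<bar>s\<bar>" "\<bar>s\<bar> < d" "(1/s) *\<^sub>R x \<in> V" unfolding W_def by auto
    show "t *\<^sub>R x \<in> W"
    proof (cases "t = 0")
      case True then show ?thesis using \<open>0 \<in> W\<close> by simp
    next
      case False
      have "\<bar>t\<bar> * \<bar>s\<bar> \<le> \<bar>s\<bar>" using t by (intro mult_left_le_one_le) auto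
      then have "\<bar>t\<bar> * \<bar>s\<bar> < d" using s(2) by linarith
      moreover have "(1/(t * s)) *\<^sub>R (t *\<^sub>R x) = (1/s) *\<^sub>R x" using False by simp
      ultimately show ?thesis unfolding W_def using s False \<open>\<bar>t\<bar> * \<bar>s\<bar> < d\<close>
        by (intro UN_I[of "t * s"]) (auto simp: abs_mult)
    qed
  qed
  ultimately show ?thesis by blast
qed

lemma sum_nbhd:
  fixes N :: "'a set"
  assumes "open N" "0 \<in> N"
  shows "\<exists>V. open V \<and> 0 \<in> V \<and> (\<forall>x\<in>V. \<forall>y\<in>V. x + y \<in> N)"
proof -
  have "open ((\<lambda>p::'a \<times> 'a. fst p + snd p) -` N)"
    using open_vimage[OF assms(1) add_cont] .
  moreover have "(0, 0) \<in> (\<lambda>p::'a \<times> 'a. fst p + snd p) -` N" using assms by simp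
  ultimately obtain R V where RV: "open R" "open V" "(0,0) \<in> R \<times> V"
      "R \<times> V \<subseteq> (\<lambda>p::'a \<times> 'a. fst p + snd p) -` N"
    by (rule open_prod_elim)
  have "x + y \<in> N" if "x \<in> R \<inter> V" "y \<in> R \<inter> V" for x y
  proof -
    have "(x, y) \<in> R \<times> V" using that by blast
    then have "(x, y) \<in> (\<lambda>p::'a \<times> 'a. fst p + snd p) -` N" using RV(4) by blast
    then show ?thesis by simp
  qed
  moreover have "0 \<in> R \<inter> V" using RV(3) by (simp add: mem_Times_iff)
  ultimately show ?thesis using RV(1,2) by (intro exI[of _ "R \<inter> V"]) (simp add: open_Int)
qed

lemma triple_nbhd:
  fixes N :: "'a set"
  assumes "open N" "0 \<in> N"
  shows "\<exists>V. open V \<and> 0 \<in> V \<and> balanced V \<and> (\<forall>x\<in>V. \<forall>y\<in>V. \<forall>z\<in>V. x + y + z \<in> N)"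
proof -
  obtain V1 where V1: "open V1" "0 \<in> V1" "\<forall>x\<in>V1. \<forall>y\<in>V1. x + y \<in> N"
    using sum_nbhd[OF assms] by blast
  obtain V2 where V2: "open V2" "0 \<in> V2" "\<forall>x\<in>V2. \<forall>y\<in>V2. x + y \<in> V1"
    using sum_nbhd[OF V1(1,2)] by blast
  obtain V where V: "open V" "0 \<in> V" "V \<subseteq> V1 \<inter> V2" "balanced V"
    using balanced_nbhd[of "V1 \<inter> V2"] V1 V2 by auto
  have "x + y + z \<in> N" if "x \<in> V" "y \<in> V" "z \<in> V" for x y z
  proof -
    have "x + y \<in> V1" using V2(3) V(3) that by blast
    moreover have "z \<in> V1" using V(3) that by blast
    ultimately show ?thesis using V1(3) by blast
  qed
  then show ?thesis using V(1,2,4) by blast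
qed

end

context
  fixes dummy :: "'a::{real_vector,t2_space} itself"
  assumes add_cont: "continuous_on UNIV (\<lambda>p::'a \<times> 'a. fst p + snd p)"
    and scale_cont: "continuous_on UNIV (\<lambda>p::real \<times> 'a. fst p *\<^sub>R snd p)"
begin

lemma fin_dim:
  fixes S :: "'a set"
  assumes finS: "finite S" and indS: "independent S"
  shows "\<exists>W. open W \<and> 0 \<in> W \<and> balanced W \<and>
           (\<forall>\<mu>. (\<exists>s\<in>S. 1 \<le> \<bar>\<mu> s\<bar>) \<longrightarrow> (\<Sum>s\<in>S. \<mu> s *\<^sub>R s) \<notin> W)"
proof -
  let ?P = "product_topology (\<lambda>_. euclideanreal) S"
  define \<Phi> where "\<Phi> \<mu> = (\<Sum>s\<in>S. \<mu> s *\<^sub>R s)" for \<mu> :: "'a \<Rightarrow> real"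
  have c\<Phi>: "continuous_map ?P euclidean \<Phi>"
    unfolding \<Phi>_def
  proof (rule cmap_sum[OF add_cont scale_cont])
    fix s assume "s \<in> S"
    then show "continuous_map ?P euclidean (\<lambda>x. x s *\<^sub>R s)"
      by (intro cmap_scale[OF add_cont scale_cont] continuous_map_product_projection) auto
  qed
  define K1 where "K1 = (\<Union>s\<in>S. {\<mu> \<in> topspace ?P. \<mu> s \<in> {-1,1}})"
  define K where "K = K1 \<inter> PiE S (\<lambda>_. {-1..1})"
  have "closedin ?P K1" unfolding K1_def
  proof (intro closedin_Union)
    show "finite ((\<lambda>s. {\<mu> \<in> topspace ?P. \<mu> s \<in> {-1,1}}) ` S)" using finS by simp
    show "closedin ?P T" if T: "T \<in> (\<lambda>s. {\<mu> \<in> topspace ?P. \<mu> s \<in> {-1,1}}) ` S" for T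
    proof -
      obtain s where s: "s \<in> S" "T = {\<mu> \<in> topspace ?P. \<mu> s \<in> {-1,1}}" using T by blast
      have "closedin euclideanreal {-1,1}" by (simp add: closed_insert)
      then show "closedin ?P T" unfolding s(2)
        by (rule closedin_continuous_map_preimage[OF continuous_map_product_projection[OF s(1)]])
    qed
  qed
  moreover have "compactin ?P (PiE S (\<lambda>_. {-1..1::real}))"
    by (simp add: compactin_PiE)
  ultimately have "compactin ?P K" unfolding K_def by (rule closed_Int_compactin)
  then have "compactin euclidean (\<Phi> ` K)" by (rule image_compactin[OF _ c\<Phi>])
  then have "closed (\<Phi> ` K)" by (simp add: compact_imp_closed)
  moreover have "0 \<notin> \<Phi> ` K"
  proof
    assume "0 \<in> \<Phi> ` K"
    then obtain \<mu> where \<mu>: "\<mu> \<in> K" "\<Phi> \<mu> = 0" by auto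
    then obtain s where s: "s \<in> S" "\<mu> s \<in> {-1,1}" unfolding K_def K1_def by auto
    then have "\<exists>v\<in>S. \<mu> v \<noteq> 0" by force
    then have "dependent S" using \<mu>(2) unfolding \<Phi>_def dependent_finite[OF finS]
      by blast
    then show False using indS by simp
  qed
  ultimately obtain W where W: "open W" "0 \<in> W" "W \<subseteq> - (\<Phi> ` K)" "balanced W"
    using balanced_nbhd[OF add_cont scale_cont, of "- (\<Phi> ` K)"] by auto
  have "(\<Sum>s\<in>S. \<mu> s *\<^sub>R s) \<notin> W" if ex: "\<exists>s\<in>S. 1 \<le> \<bar>\<mu> s\<bar>" for \<mu>
  proof
    assume inW: "(\<Sum>s\<in>S. \<mu> s *\<^sub>R s) \<in> W"
    define m where "m = Max ((\<lambda>s. \<bar>\<mu> s\<bar>) ` S)"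
    have Sne: "S \<noteq> {}" using ex by auto
    have m_ge: "\<bar>\<mu> s\<bar> \<le> m" if "s \<in> S" for s unfolding m_def using finS that by simp
    obtain s1 where s1: "s1 \<in> S" "1 \<le> \<bar>\<mu> s1\<bar>" using ex by blast
    have "m \<ge> 1" using m_ge[OF s1(1)] s1(2) by linarith
    have "m \<in> (\<lambda>s. \<bar>\<mu> s\<bar>) ` S" unfolding m_def using finS Sne by (intro Max_in) auto
    then obtain s0 where s0: "s0 \<in> S" "\<bar>\<mu> s0\<bar> = m" by blast
    define \<nu> where "\<nu> = restrict (\<lambda>s. \<mu> s / m) S"
    have "\<nu> \<in> PiE S (\<lambda>_. {-1..1})"
    proof -
      have mpos: "m > 0" using \<open>m \<ge> 1\<close> by linarith
      have "\<mu> s / m \<in> {-1..1}" if "s \<in> S" for s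
      proof -
        have "\<bar>\<mu> s\<bar> \<le> m" by (rule m_ge[OF that])
        then have a: "- m \<le> \<mu> s" "\<mu> s \<le> m" by linarith+
        have "\<mu> s / m \<le> 1" using a(2) mpos by (simp add: divide_le_eq)
        moreover have "-1 \<le> \<mu> s / m" using a(1) mpos by (simp add: le_divide_eq)
        ultimately show ?thesis by simp
      qed
      then show ?thesis unfolding \<nu>_def by (simp add: restrict_PiE_iff)
    qed
    moreover have "\<nu> \<in> K1"
    proof -
      have "\<nu> s0 \<in> {-1,1}" using s0 \<open>m \<ge> 1\<close> unfolding \<nu>_def
        by (cases "\<mu> s0 \<ge> 0") auto
      moreover have "\<nu> \<in> topspace ?P" unfolding \<nu>_def by simp
      ultimately show ?thesis unfolding K1_def using s0(1) by blast
    qed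
    ultimately have nuK: "\<nu> \<in> K" unfolding K_def by blast
    have eq: "\<Phi> \<nu> = (1/m) *\<^sub>R (\<Sum>s\<in>S. \<mu> s *\<^sub>R s)"
      unfolding \<Phi>_def \<nu>_def scaleR_sum_right by (intro sum.cong) auto
    have inW2: "(1/m) *\<^sub>R (\<Sum>s\<in>S. \<mu> s *\<^sub>R s) \<in> W"
    proof -
      have "\<bar>1/m\<bar> \<le> 1" using \<open>m \<ge> 1\<close> by simp
      then show ?thesis using W(4) inW unfolding balanced_def by blast
    qed
    have "\<Phi> \<nu> \<in> W" using eq inW2 by simp
    moreover have "\<Phi> \<nu> \<in> \<Phi> ` K" using nuK by (rule imageI)
    ultimately show False using W(3) by blast
  qed
  then show ?thesis using W by blast
qed

end

lemma asg_base: "x \<in> S \<Longrightarrow> x \<in> add_subgroup_gen S"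
  unfolding add_subgroup_gen_def by blast
lemma asg_zero: "0 \<in> add_subgroup_gen S"
  unfolding add_subgroup_gen_def by blast
lemma asg_diff: "x \<in> add_subgroup_gen S \<Longrightarrow> y \<in> add_subgroup_gen S \<Longrightarrow> x - y \<in> add_subgroup_gen S"
  unfolding add_subgroup_gen_def by blast
lemma asg_neg: "y \<in> add_subgroup_gen S \<Longrightarrow> - y \<in> add_subgroup_gen S"
  using asg_diff[OF asg_zero, of y S] by simp
lemma asg_add: "x \<in> add_subgroup_gen S \<Longrightarrow> y \<in> add_subgroup_gen S \<Longrightarrow> x + y \<in> add_subgroup_gen S"
  using asg_diff[of x S "- y"] asg_neg[of y S] by simp

lemma asg_nat: "x \<in> add_subgroup_gen S \<Longrightarrow> of_nat n *\<^sub>R x \<in> add_subgroup_gen (S :: 'a::real_vector set)"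
proof (induction n)
  case 0 then show ?case by (simp add: asg_zero)
next
  case (Suc n)
  have "of_nat (Suc n) *\<^sub>R x = of_nat n *\<^sub>R x + x" by (simp add: algebra_simps)
  then show ?case using asg_add[OF Suc.IH[OF Suc.prems] Suc.prems] by simp
qed

lemma asg_int:
  assumes x: "x \<in> add_subgroup_gen (S :: 'a::real_vector set)"
  shows "of_int k *\<^sub>R x \<in> add_subgroup_gen S"
proof (cases "k \<ge> 0")
  case True
  then obtain n where "k = int n" using nonneg_eq_int by blast
  then show ?thesis using asg_nat[OF x, of n] by simp
next
  case False
  define n where "n = nat (- k)"
  have "k = - int n" using False unfolding n_def by simp
  then show ?thesis using asg_neg[OF asg_nat[OF x, of n]] by simp
qed

lemma asg_sum: "finite T \<Longrightarrow> (\<And>t. t \<in> T \<Longrightarrow> f t \<in> add_subgroup_gen S) \<Longrightarrow> sum f T \<in> add_subgroup_gen S"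
  by (induction T rule: finite_induct) (auto simp: asg_zero asg_add)

lemma common_denom:
  fixes q :: "'b \<Rightarrow> real"
  assumes "finite T" "\<And>t. t \<in> T \<Longrightarrow> q t \<in> \<rat>"
  shows "\<exists>N::nat. N > 0 \<and> (\<forall>t\<in>T. of_nat N * q t \<in> \<int>)"
  using assms
proof (induction T rule: finite_induct)
  case empty then show ?case by (intro exI[of _ 1]) auto
next
  case (insert a T)
  then obtain N where N: "N > 0" "\<forall>t\<in>T. of_nat N * q t \<in> \<int>" by auto
  have "q a \<in> \<rat>" using insert by auto
  then obtain p n where pn: "n > 0" "q a = of_int p / of_int n" by (rule Rats_cases')
  have "of_nat (N * nat n) * q t \<in> \<int>" if "t \<in> insert a T" for t
  proof (cases "t = a")
    case True
    have nn: "real (nat n) = real_of_int n" using pn by simp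
    have "of_nat (N * nat n) * q t = of_nat N * (of_int n * (of_int p / of_int n))"
      using pn True nn by simp
    also have "\<dots> = of_nat N * of_int p" using pn by simp
    finally have eq: "of_nat (N * nat n) * q t = of_nat N * of_int p" .
    show ?thesis by (subst eq) (intro Ints_mult Ints_of_nat Ints_of_int)
  next
    case False
    then have "t \<in> T" using that by simp
    then have a: "of_nat N * q t \<in> \<int>" using N by simp
    have eq2: "of_nat (N * nat n) * q t = of_int n * (of_nat N * q t)" using pn by simp
    have b: "(of_int n :: real) \<in> \<int>" by simp
    show ?thesis by (subst eq2) (rule Ints_mult[OF b a])
  qed
  moreover have "N * nat n > 0" using N pn by simp
  ultimately show ?case by blast
qed

lemma rat_comb_in:
  fixes U :: "'a::real_vector set"
  assumes bal: "balanced U" and sub: "add_subgroup_gen P \<subseteq> U" and finT: "finite T" and TP: "T \<subseteq> P"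
    and rat: "\<And>t. t \<in> T \<Longrightarrow> q t \<in> \<rat>"
  shows "(\<Sum>t\<in>T. q t *\<^sub>R t) \<in> U"
proof -
  have ex: "\<exists>N::nat. N > 0 \<and> (\<forall>t\<in>T. of_nat N * q t \<in> \<int>)"
    using common_denom[OF finT rat] .
  then obtain N :: nat where N: "N > 0" "\<forall>t\<in>T. of_nat N * q t \<in> \<int>" by (elim exE conjE)
  define k where "k t = \<lfloor>of_nat N * q t\<rfloor>" for t
  have k: "of_int (k t) = of_nat N * q t" if "t \<in> T" for t
  proof -
    have "of_nat N * q t \<in> \<int>" using N(2) that by blast
    then obtain j where j: "of_nat N * q t = of_int j" by (rule Ints_cases)
    show ?thesis unfolding k_def j by simp
  qed
  have "(\<Sum>t\<in>T. of_int (k t) *\<^sub>R t) \<in> add_subgroup_gen P"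
    using finT TP by (intro asg_sum asg_int asg_base) auto
  then have in_U: "(\<Sum>t\<in>T. of_int (k t) *\<^sub>R t) \<in> U" using sub by blast
  have "(\<Sum>t\<in>T. q t *\<^sub>R t) = (1 / of_nat N) *\<^sub>R (\<Sum>t\<in>T. of_int (k t) *\<^sub>R t)"
    unfolding scaleR_sum_right using N(1) by (intro sum.cong refl) (simp add: k)
  moreover have "\<bar>1 / real N\<bar> \<le> 1" using N(1) by simp
  moreover have "(1 / of_nat N) *\<^sub>R (\<Sum>t\<in>T. of_int (k t) *\<^sub>R t) \<in> U"
    using bal in_U \<open>\<bar>1 / real N\<bar> \<le> 1\<close> unfolding balanced_def by blast
  ultimately show ?thesis by simp
qed

context
  fixes dummy :: "'a::{real_vector,t2_space} itself"
  assumes add_cont: "continuous_on UNIV (\<lambda>p::'a \<times> 'a. fst p + snd p)"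
    and scale_cont: "continuous_on UNIV (\<lambda>p::real \<times> 'a. fst p *\<^sub>R snd p)"
begin

lemma approx_rat:
  fixes T :: "'a set" and V :: "'a set" and lam :: "'a \<Rightarrow> real"
  assumes "finite T" "open V" "0 \<in> V"
  shows "\<exists>q. (\<forall>t. q t \<in> \<rat>) \<and> (\<Sum>t\<in>T. lam t *\<^sub>R t) - (\<Sum>t\<in>T. q t *\<^sub>R t) \<in> V"
  using assms
proof (induction T arbitrary: V rule: finite_induct)
  case empty
  then show ?case by (intro exI[of _ "\<lambda>_. 0"]) simp
next
  case (insert a T)
  obtain V1 where V1: "open V1" "0 \<in> V1" "\<forall>x\<in>V1. \<forall>y\<in>V1. x + y \<in> V"
    using sum_nbhd[OF add_cont scale_cont insert.prems] by blast
  obtain q where q: "\<forall>t. q t \<in> \<rat>" "(\<Sum>t\<in>T. lam t *\<^sub>R t) - (\<Sum>t\<in>T. q t *\<^sub>R t) \<in> V1"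
    using insert.IH[OF V1(1,2)] by blast
  have "continuous_map euclidean euclidean (\<lambda>r::real. r *\<^sub>R a)"
    by (intro cmap_scale[OF add_cont scale_cont]) auto
  then have "open ((\<lambda>r::real. r *\<^sub>R a) -` V1)" using open_vimage[OF V1(1)] by simp
  moreover have "0 \<in> (\<lambda>r::real. r *\<^sub>R a) -` V1" using V1(2) by simp
  ultimately obtain d where d: "d > 0" "ball 0 d \<subseteq> (\<lambda>r::real. r *\<^sub>R a) -` V1"
    using open_contains_ball by blast
  obtain r where r: "r \<in> \<rat>" "lam a - d < r" "r < lam a"
    using Rats_dense_in_real[of "lam a - d" "lam a"] d(1) by auto
  have "lam a - r \<in> ball 0 d" using r by (simp add: dist_real_def)
  then have ra: "(lam a - r) *\<^sub>R a \<in> V1" using d(2) by blast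
  define q' where "q' = q(a := r)"
  have f1: "\<forall>t. q' t \<in> \<rat>" using q(1) r(1) unfolding q'_def by simp
  have sT: "(\<Sum>t\<in>T. q' t *\<^sub>R t) = (\<Sum>t\<in>T. q t *\<^sub>R t)"
    unfolding q'_def using insert.hyps(2) by (intro sum.cong) auto
  have eqbig: "(\<Sum>t\<in>insert a T. lam t *\<^sub>R t) - (\<Sum>t\<in>insert a T. q' t *\<^sub>R t)
      = (lam a - r) *\<^sub>R a + ((\<Sum>t\<in>T. lam t *\<^sub>R t) - (\<Sum>t\<in>T. q t *\<^sub>R t))"
    using insert.hyps sT by (simp add: q'_def algebra_simps)
  have mem: "(lam a - r) *\<^sub>R a + ((\<Sum>t\<in>T. lam t *\<^sub>R t) - (\<Sum>t\<in>T. q t *\<^sub>R t)) \<in> V"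
    using V1(3) ra q(2) by blast
  have "(\<Sum>t\<in>insert a T. lam t *\<^sub>R t) - (\<Sum>t\<in>insert a T. q' t *\<^sub>R t) \<in> V"
    unfolding eqbig by (rule mem)
  then show ?case using f1 by blast
qed

lemma key:
  fixes A S :: "'a set" and c :: 'a
  assumes summ: "abs_cauchy_summable A" and indA: "independent A"
    and finS: "finite S" and SA: "S \<subseteq> A" and cA: "c \<in> A" and cS: "c \<notin> S"
  shows "\<exists>F W. finite F \<and> open W \<and> 0 \<in> W \<and> balanced W \<and> (\<forall>z\<in>span (S \<union> (A - F)). c + z \<notin> W)"
proof -
  have "insert c S \<subseteq> A" using SA cA by blast
  then have "independent (insert c S)" by (rule independent_mono[OF indA])
  then obtain W0 where W0: "open W0" "0 \<in> W0" "balanced W0"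
      "\<forall>\<mu>. (\<exists>s\<in>insert c S. 1 \<le> \<bar>\<mu> s\<bar>) \<longrightarrow> (\<Sum>s\<in>insert c S. \<mu> s *\<^sub>R s) \<notin> W0"
    using fin_dim[OF add_cont scale_cont, of "insert c S"] finS by blast
  obtain V where V: "open V" "0 \<in> V" "balanced V" "\<forall>x\<in>V. \<forall>y\<in>V. \<forall>z\<in>V. x + y + z \<in> W0"
    using triple_nbhd[OF add_cont scale_cont W0(1,2)] by blast
  obtain F where F: "finite F" "F \<subseteq> A" "add_subgroup_gen (A - F) \<subseteq> V"
    using summ V(1,2) unfolding abs_cauchy_summable_def by blast
  have neg: "- v \<in> V" if "v \<in> V" for v
  proof -
    have "\<bar>-1::real\<bar> \<le> 1" by simp
    then have "(-1::real) *\<^sub>R v \<in> V" using V(3) that unfolding balanced_def by blast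
    then show ?thesis by simp
  qed
  have "c + z \<notin> V" if z: "z \<in> span (S \<union> (A - F))" for z
  proof
    assume czV: "c + z \<in> V"
    obtain x y where xy: "z = x + y" "x \<in> span S" "y \<in> span (A - F)"
      using z unfolding span_Un by blast
    obtain u where u: "x = (\<Sum>v\<in>S. u v *\<^sub>R v)" using xy(2) unfolding span_finite[OF finS] by blast
    obtain T r where Tr: "finite T" "T \<subseteq> A - F" "y = (\<Sum>a\<in>T. r a *\<^sub>R a)"
      using xy(3) unfolding span_explicit by blast
    obtain q where q: "\<forall>t. q t \<in> \<rat>" "y - (\<Sum>t\<in>T. q t *\<^sub>R t) \<in> V"
      using approx_rat[of T V r] Tr V(1,2) by auto
    have qV: "(\<Sum>t\<in>T. q t *\<^sub>R t) \<in> V"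
      using rat_comb_in[OF V(3) F(3) Tr(1) Tr(2)] q(1) by blast
    have AA: "(c + z) + (- (\<Sum>t\<in>T. q t *\<^sub>R t)) + (- (y - (\<Sum>t\<in>T. q t *\<^sub>R t))) \<in> W0"
      using V(4) czV neg[OF qV] neg[OF q(2)] by blast
    have eqA: "(c + z) + (- (\<Sum>t\<in>T. q t *\<^sub>R t)) + (- (y - (\<Sum>t\<in>T. q t *\<^sub>R t))) = c + x"
      using xy(1) by (simp add: algebra_simps)
    have cxW: "c + x \<in> W0" using AA unfolding eqA .
    define \<nu> where "\<nu> = u(c := 1)"
    have "(\<Sum>s\<in>S. \<nu> s *\<^sub>R s) = x" unfolding u \<nu>_def using cS by (intro sum.cong) auto
    then have eqS: "(\<Sum>s\<in>insert c S. \<nu> s *\<^sub>R s) = c + x" using cS finS by (simp add: \<nu>_def)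
    have ex: "\<exists>s\<in>insert c S. 1 \<le> \<bar>\<nu> s\<bar>" unfolding \<nu>_def by auto
    have "(\<Sum>s\<in>insert c S. \<nu> s *\<^sub>R s) \<notin> W0" using W0(4) ex by blast
    then show False using cxW unfolding eqS by blast
  qed
  then have "\<forall>z\<in>span (S \<union> (A - F)). c + z \<notin> V" by blast
  then show ?thesis using F(1) V(1,2,3) by (intro exI[of _ F] exI[of _ V]) simp
qed

end

definition Fsel :: "'a::{real_vector,topological_space} set \<Rightarrow> 'a set \<Rightarrow> 'a \<Rightarrow> 'a set" where
  "Fsel A S c = (SOME F. finite F \<and> (\<exists>W. open W \<and> 0 \<in> W \<and> balanced W \<and> (\<forall>z\<in>span (S \<union> (A - F)). c + z \<notin> W)))"

primrec st :: "'a::{real_vector,topological_space} set \<Rightarrow> nat \<Rightarrow> 'a set \<times> 'a set" where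
  "st A 0 = ({}, {})"
| "st A (Suc n) = (let c = (SOME c. c \<in> A \<and> c \<notin> fst (st A n) \<union> snd (st A n))
     in (insert c (fst (st A n)), snd (st A n) \<union> Fsel A (fst (st A n)) c))"

definition chs :: "'a::{real_vector,topological_space} set \<Rightarrow> nat \<Rightarrow> 'a" where
  "chs A n = (SOME c. c \<in> A \<and> c \<notin> fst (st A n) \<union> snd (st A n))"

lemma st_Suc_fst: "fst (st A (Suc n)) = insert (chs A n) (fst (st A n))"
  by (simp add: Let_def chs_def)
lemma st_Suc_snd: "snd (st A (Suc n)) = snd (st A n) \<union> Fsel A (fst (st A n)) (chs A n)"
  by (simp add: Let_def chs_def)

context
  fixes dummy :: "'a::{real_vector,t2_space} itself"
  assumes add_cont: "continuous_on UNIV (\<lambda>p::'a \<times> 'a. fst p + snd p)"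
    and scale_cont: "continuous_on UNIV (\<lambda>p::real \<times> 'a. fst p *\<^sub>R snd p)"
begin

lemma coord_cont:
  fixes B :: "'a set" and b :: 'a
  assumes indB: "independent B" and bB: "b \<in> B" and W: "open W" "0 \<in> W" "balanced W"
    and avoid: "\<forall>z\<in>span (B - {b}). b + z \<notin> W"
  shows "continuous_on (span B) (\<lambda>x. representation B x b)"
proof -
  have small: "\<bar>representation B x b\<bar> < 1" if x: "x \<in> span B" "x \<in> W" for x
  proof (rule ccontr)
    assume "\<not> \<bar>representation B x b\<bar> < 1"
    then have r1: "1 \<le> \<bar>representation B x b\<bar>" by simp
    define r where "r = representation B x b"
    have r0: "r \<noteq> 0" using r1 unfolding r_def by auto
    have "\<bar>1/r\<bar> \<le> 1" using r1 unfolding r_def by (simp add: abs_div_pos)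
    then have xW: "(1/r) *\<^sub>R x \<in> W" using W(3) x(2) unfolding balanced_def by blast
    define y where "y = x - r *\<^sub>R b"
    have bspan: "b \<in> span B" using bB by (rule span_base)
    have rb: "r *\<^sub>R b \<in> span B" using bspan by (rule span_scale)
    have yspan: "y \<in> span B" unfolding y_def using x(1) rb by (rule span_diff)
    have "representation B y b = representation B x b - representation B (r *\<^sub>R b) b"
      unfolding y_def using representation_diff[OF indB rb x(1)] by simp
    also have "representation B (r *\<^sub>R b) b = r * representation B b b"
      using representation_scale[OF indB bspan] by simp
    also have "representation B b b = 1" using representation_basis[OF indB bB] by simp
    finally have yb: "representation B y b = 0" unfolding r_def by simp
    have "y = (\<Sum>v | representation B y v \<noteq> 0. representation B y v *\<^sub>R v)"
      using sum_nonzero_representation_eq[OF indB yspan] by simp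
    moreover have "(\<Sum>v | representation B y v \<noteq> 0. representation B y v *\<^sub>R v) \<in> span (B - {b})"
    proof (rule span_sum)
      fix v assume v: "v \<in> {v. representation B y v \<noteq> 0}"
      then have "v \<in> B" using representation_ne_zero by blast
      moreover have "v \<noteq> b" using v yb by auto
      ultimately have "v \<in> span (B - {b})" by (intro span_base) blast
      then show "representation B y v *\<^sub>R v \<in> span (B - {b})" by (rule span_scale)
    qed
    ultimately have "y \<in> span (B - {b})" by simp
    then have ys: "(1/r) *\<^sub>R y \<in> span (B - {b})" by (rule span_scale)
    have "(1/r) *\<^sub>R x = b + (1/r) *\<^sub>R y" unfolding y_def using r0
      by (simp add: algebra_simps)
    then have "b + (1/r) *\<^sub>R y \<in> W" using xW by simp
    then show False using avoid ys by blast
  qed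
  show ?thesis unfolding continuous_on_topological
  proof (intro ballI allI impI)
    fix x0 Op assume x0: "x0 \<in> span B" and Op: "open Op" "representation B x0 b \<in> Op"
    obtain e where e: "e > 0" "ball (representation B x0 b) e \<subseteq> Op"
      by (rule openE[OF Op(1) Op(2)])
    define T where "T = (\<lambda>y. (1/e) *\<^sub>R (y + (- x0))) -` W"
    have "open T" unfolding T_def by (rule open_vimage[OF W(1) cont_affine[OF add_cont scale_cont]])
    moreover have "x0 \<in> T" unfolding T_def using W(2) by simp
    moreover have "representation B y b \<in> Op" if y: "y \<in> span B" "y \<in> T" for y
    proof -
      have dspan: "y - x0 \<in> span B" using y(1) x0 by (rule span_diff)
      have zs: "(1/e) *\<^sub>R (y - x0) \<in> span B" using dspan by (rule span_scale)
      have zW: "(1/e) *\<^sub>R (y - x0) \<in> W" using y(2) unfolding T_def by simp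
      have r1: "representation B ((1/e) *\<^sub>R (y - x0)) b = (1/e) * representation B (y - x0) b"
        using representation_scale[OF indB dspan] by simp
      have r2: "representation B (y - x0) b = representation B y b - representation B x0 b"
        using representation_diff[OF indB x0 y(1)] by simp
      define d where "d = representation B y b - representation B x0 b"
      have "\<bar>(1/e) * d\<bar> < 1" using small[OF zs zW] unfolding r1 r2 d_def .
      moreover have "\<bar>d\<bar> = e * \<bar>(1/e) * d\<bar>" using e(1) by (simp add: abs_mult)
      ultimately have "\<bar>d\<bar> < e" using e(1) by (metis mult.right_neutral mult_strict_left_mono)
      then have "representation B y b \<in> ball (representation B x0 b) e"
        unfolding d_def by (simp add: dist_real_def abs_minus_commute)
      then show ?thesis using e(2) by blast
    qed
    ultimately show "\<exists>A. open A \<and> x0 \<in> A \<and> (\<forall>y\<in>span B. y \<in> A \<longrightarrow> representation B y b \<in> Op)"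
      by (intro exI[of _ T] conjI ballI impI) auto
  qed
qed

lemma proj_cont:
  fixes B C :: "'a set"
  assumes "\<And>c. c \<in> C \<Longrightarrow> continuous_on (span B) (\<lambda>x. representation B x c)"
  shows "continuous_on (span B) (proj_span B C)"
proof -
  have "continuous_map (top_of_set (span B)) euclidean (\<lambda>x. \<Sum>c\<in>C. representation B x c *\<^sub>R c)"
  proof (rule cmap_sum[OF add_cont scale_cont])
    fix c assume "c \<in> C"
    then have "continuous_map (top_of_set (span B)) euclidean (\<lambda>x. representation B x c)"
      using assms by simp
    then show "continuous_map (top_of_set (span B)) euclidean (\<lambda>x. representation B x c *\<^sub>R c)"
      by (intro cmap_scale[OF add_cont scale_cont]) auto
  qed
  then show ?thesis unfolding proj_span_def by simp
qed

end

theorem theorem9p7: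
  fixes A :: "'a::{real_vector, t2_space} set"
  assumes add_cont: "continuous_on UNIV (\<lambda>p::'a \<times> 'a. fst p + snd p)"
    and scale_cont: "continuous_on UNIV (\<lambda>p::real \<times> 'a. fst p *\<^sub>R snd p)"
    and "infinite A"
    and "independent A"
    and "abs_cauchy_summable A"
  shows "\<exists>B\<subseteq>A. infinite B \<and>
           (\<forall>C. finite C \<and> C \<subseteq> B \<longrightarrow> continuous_on (span B) (proj_span B C))"
proof -
  note infA = \<open>infinite A\<close> and indA = \<open>independent A\<close> and summ = \<open>abs_cauchy_summable A\<close>
  define D where "D n = fst (st A n)" for n
  define X where "X n = snd (st A n)" for n
  define ch where "ch n = chs A n" for n
  have D0: "D 0 = {}" and X0: "X 0 = {}" unfolding D_def X_def by simp_all
  have DS: "D (Suc n) = insert (ch n) (D n)" for n unfolding D_def ch_def by (rule st_Suc_fst)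
  have XS: "X (Suc n) = X n \<union> Fsel A (D n) (ch n)" for n unfolding D_def X_def ch_def by (rule st_Suc_snd)
  have ch_prop: "ch n \<in> A \<and> ch n \<notin> D n \<union> X n" if "finite (D n)" "finite (X n)" for n
  proof -
    have "finite (D n \<union> X n)" using that by simp
    then have "\<not> A \<subseteq> D n \<union> X n" using infA finite_subset by blast
    then have "\<exists>c. c \<in> A \<and> c \<notin> D n \<union> X n" by blast
    then show ?thesis unfolding ch_def chs_def D_def X_def by (rule someI_ex)
  qed
  have F_prop: "finite (Fsel A (D n) (ch n)) \<and> (\<exists>W. open W \<and> 0 \<in> W \<and> balanced W \<and>
      (\<forall>z\<in>span (D n \<union> (A - Fsel A (D n) (ch n))). ch n + z \<notin> W))"
    if "finite (D n)" "D n \<subseteq> A" "ch n \<in> A" "ch n \<notin> D n" for n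
  proof -
    have "\<exists>F W. finite F \<and> open W \<and> 0 \<in> W \<and> balanced W \<and> (\<forall>z\<in>span (D n \<union> (A - F)). ch n + z \<notin> W)"
      by (rule key[OF add_cont scale_cont summ indA that])
    then have "\<exists>F. finite F \<and> (\<exists>W. open W \<and> 0 \<in> W \<and> balanced W \<and> (\<forall>z\<in>span (D n \<union> (A - F)). ch n + z \<notin> W))"
      by blast
    then show ?thesis unfolding Fsel_def by (rule someI_ex)
  qed
  have inv: "finite (D n) \<and> finite (X n) \<and> D n \<subseteq> A" for n
  proof (induction n)
    case 0 then show ?case by (simp add: D0 X0)
  next
    case (Suc n)
    then have c: "ch n \<in> A \<and> ch n \<notin> D n \<union> X n" using ch_prop by blast
    then have "finite (Fsel A (D n) (ch n))" using F_prop Suc by blast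
    then show ?case using Suc c unfolding DS XS by simp
  qed
  have chA: "ch n \<in> A" and chD: "ch n \<notin> D n" and chX: "ch n \<notin> X n" for n
    using ch_prop inv by blast+
  have Fp: "\<exists>W. open W \<and> 0 \<in> W \<and> balanced W \<and>
      (\<forall>z\<in>span (D n \<union> (A - Fsel A (D n) (ch n))). ch n + z \<notin> W)" for n
    using F_prop[of n] inv[of n] chA[of n] chD[of n] by blast
  have Deq: "D n = ch ` {..<n}" for n
    by (induction n) (simp_all add: D0 DS lessThan_Suc)
  have Xmono: "X m \<subseteq> X n" if "m \<le> n" for m n
  proof -
    have "X k \<subseteq> X (Suc k)" for k by (simp add: XS)
    then show ?thesis using lift_Suc_mono_le[of X m n] that by blast
  qed
  have chinj: "inj ch"
  proof (rule linorder_injI)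
    fix m n :: nat assume "m < n"
    then have "ch m \<in> D n" unfolding Deq by blast
    then show "ch m \<noteq> ch n" using chD[of n] by metis
  qed
  define B where "B = range ch"
  have BA: "B \<subseteq> A" unfolding B_def using chA by blast
  have infB: "infinite B" unfolding B_def using chinj by (rule range_inj_infinite)
  have indB: "independent B" using indA BA by (rule independent_mono)
  have cc: "continuous_on (span B) (\<lambda>x. representation B x b)" if bB: "b \<in> B" for b
  proof -
    obtain n where n: "b = ch n" using bB unfolding B_def by blast
    obtain W where W: "open W" "0 \<in> W" "balanced W"
        "\<forall>z\<in>span (D n \<union> (A - Fsel A (D n) (ch n))). ch n + z \<notin> W"
      using Fp[of n] by (elim exE conjE) (rule that)
    have sub: "B - {b} \<subseteq> D n \<union> (A - Fsel A (D n) (ch n))"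
    proof
      fix z assume z: "z \<in> B - {b}"
      then obtain m where m: "z = ch m" "m \<noteq> n" unfolding B_def n by blast
      show "z \<in> D n \<union> (A - Fsel A (D n) (ch n))"
      proof (cases "m < n")
        case True
        then show ?thesis unfolding m Deq by blast
      next
        case False
        then have "Suc n \<le> m" using m(2) by simp
        then have "X (Suc n) \<subseteq> X m" by (rule Xmono)
        then have "Fsel A (D n) (ch n) \<subseteq> X m" unfolding XS by blast
        then have "ch m \<notin> Fsel A (D n) (ch n)" using chX[of m] by blast
        then show ?thesis unfolding m using chA[of m] by blast
      qed
    qed
    then have "span (B - {b}) \<subseteq> span (D n \<union> (A - Fsel A (D n) (ch n)))" by (rule span_mono)
    then have "\<forall>z\<in>span (B - {b}). b + z \<notin> W" using W(4) unfolding n by blast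
    then show ?thesis by (rule coord_cont[OF add_cont scale_cont indB bB W(1,2,3)])
  qed
  have "continuous_on (span B) (proj_span B C)" if "finite C" "C \<subseteq> B" for C
    using cc that by (intro proj_cont[OF add_cont scale_cont]) blast
  then show ?thesis using BA infB by blast
qed

end
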